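(* For $d\in[0,D]$, let $U(d)$ be the optimal value of \[ \min_{\{E_n\},\{t_n\}} \ \sum_{n=1}^N E_n\left(1+\frac{h_n}{g_n}\right) \] subject to \[ d\le \sum_{n=1}^N t_n W\ln\left(1+\frac{E_n h_n}{t_n\sigma^2 W}\right),\qquad 2\sum_{n=1}^N t_n\le T-\frac{Ld}{f_B},\qquad E_n\ge 0,\ t_n\ge 0\ \ \forall n. \] Equivalently, $U(d)$ is the optimal value of \[ \min_{\{E_n\ge0\}} \sum_{n=1}^N E_n\left(1+\frac{h_n}{g_n}\right)\quad \text{s.t.}\quad \sum_{n=1}^N E_nh_n\ge \frac12\sigma^2W\left(T-\frac{Ld}{f_B}\right)\left(e^{\frac{2d}{W(T-Ld/f_B)}}-1\right). \] Then the problem \[ \min_{0\le d\le D}\ U(d)+\frac{\kappa L^3(D-d)^3}{T^2} \] is a convex optimization problem, i.e., its objective is a convex function of $d$.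
   Context: All parameters $N, h_n, g_n, W, \sigma^2, \kappa, L, D, T, f_B$ are given positive constants, and $n$ ranges over $\{1,\dots,N\}$. The term $t_n W\ln\left(1+\frac{E_n h_n}{t_n\sigma^2W}\right)$ is interpreted as $0$ when $t_n=0$. Here $d$ ranges over values with $Ld\le f_BT$; the value $U(d)$ is understood as $+\infty$ when the inner problem is infeasible. *)

theory Defs
  imports "HOL-Analysis.Analysis"
begin

definition rate_term :: "real \<Rightarrow> real \<Rightarrow> real \<Rightarrow> real \<Rightarrow> real \<Rightarrow> real" where
  "rate_term W \<sigma> h E t = (if t = 0 then 0 else t * W * ln (1 + E * h / (t * \<sigma>^2 * W)))"

text \<open>Optimal value U(d) of the inner problem (extended real; Inf of the empty set is +infinity).\<close>
definition U_val :: "nat \<Rightarrow> (nat \<Rightarrow> real) \<Rightarrow> (nat \<Rightarrow> real) \<Rightarrow> real \<Rightarrow> real \<Rightarrow> real \<Rightarrow> real \<Rightarrow> real \<Rightarrow> real \<Rightarrow> ereal" where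
  "U_val N h g W \<sigma> L T f\<^sub>B d =
     Inf { ereal (\<Sum>n\<in>{1..N}. E n * (1 + h n / g n)) | E t.
            (\<forall>n\<in>{1..N}. E n \<ge> 0 \<and> t n \<ge> 0) \<and>
            d \<le> (\<Sum>n\<in>{1..N}. rate_term W \<sigma> (h n) (E n) (t n)) \<and>
            2 * (\<Sum>n\<in>{1..N}. t n) \<le> T - L * d / f\<^sub>B }"

definition ereal_convex_on :: "real set \<Rightarrow> (real \<Rightarrow> ereal) \<Rightarrow> bool" where
  "ereal_convex_on S F \<longleftrightarrow> convex S \<and>
     (\<forall>x\<in>S. \<forall>y\<in>S. \<forall>u::real. 0 < u \<and> u < 1 \<longrightarrow>
        F (u * x + (1 - u) * y) \<le> ereal u * F x + ereal (1 - u) * F y)"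

end

theory Submission imports Defs begin

lemma rate_mono_E:
  assumes "W > 0" "\<sigma> > 0" "h \<ge> 0" "0 \<le> E" "E \<le> E'" "t \<ge> 0"
  shows "rate_term W \<sigma> h E t \<le> rate_term W \<sigma> h E' t"
proof (cases "t = 0")
  case True then show ?thesis by (simp add: rate_term_def)
next
  case False
  then have tp: "t > 0" using assms by simp
  have k: "t * \<sigma>^2 * W > 0" using tp assms by simp
  have a: "E * h / (t * \<sigma>^2 * W) \<le> E' * h / (t * \<sigma>^2 * W)"
    using k assms by (intro divide_right_mono mult_right_mono) auto
  have b: "0 \<le> E * h / (t * \<sigma>^2 * W)" using k assms by simp
  have "ln (1 + E * h / (t * \<sigma>^2 * W)) \<le> ln (1 + E' * h / (t * \<sigma>^2 * W))"
    using a b by simp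
  then show ?thesis using tp assms False by (simp add: rate_term_def)
qed

lemma rate_scale:
  assumes "c > 0"
  shows "rate_term W \<sigma> h (c * E) (c * t) = c * rate_term W \<sigma> h E t"
  using assms by (simp add: rate_term_def mult.assoc)

lemma rate_nonneg:
  assumes "W > 0" "\<sigma> > 0" "h \<ge> 0" "0 \<le> E" "t \<ge> 0"
  shows "rate_term W \<sigma> h E t \<ge> 0"
  using assms by (auto simp: rate_term_def)

lemma rate_concave_pos:
  assumes "W > 0" "\<sigma> > 0" "h \<ge> 0" "0 \<le> E1" "0 \<le> E2" "t1 > 0" "t2 > 0" "0 < u" "u < 1"
  shows "u * rate_term W \<sigma> h E1 t1 + (1 - u) * rate_term W \<sigma> h E2 t2
         \<le> rate_term W \<sigma> h (u * E1 + (1 - u) * E2) (u * t1 + (1 - u) * t2)"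
proof -
  define k where "k = \<sigma>^2 * W"
  have kp: "k > 0" using assms by (simp add: k_def)
  define t where "t = u * t1 + (1 - u) * t2"
  have tp: "t > 0" using assms by (simp add: t_def add_pos_pos)
  define l where "l = u * t1 / t"
  define m where "m = (1 - u) * t2 / t"
  have "l + m = (u * t1 + (1 - u) * t2) / t" unfolding l_def m_def by (simp add: add_divide_distrib)
  also have "\<dots> = 1" using tp by (simp add: t_def)
  finally have lm: "l \<ge> 0" "m \<ge> 0" "l + m = 1" using assms tp
    by (auto simp: l_def m_def)
  define A1 where "A1 = 1 + E1 * h / (t1 * k)"
  define A2 where "A2 = 1 + E2 * h / (t2 * k)"
  have A: "A1 > 0" "A2 > 0" using assms kp by (auto simp: A1_def A2_def add_pos_nonneg)
  have c: "l * ln A1 + m * ln A2 \<le> ln (l * A1 + m * A2)"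
    using lm A ln_concave by (simp add: concave_on_iff)
  have eq: "l * A1 + m * A2 = 1 + (u * E1 + (1 - u) * E2) * h / (t * k)"
  proof -
    have "l * A1 + m * A2 = (l + m) + (u * E1 * h / (t * k) + (1 - u) * E2 * h / (t * k))"
      using tp kp assms unfolding A1_def A2_def l_def m_def by (simp add: field_simps)
    then show ?thesis using lm(3) by (simp add: add_divide_distrib distrib_right)
  qed
  have "u * rate_term W \<sigma> h E1 t1 + (1 - u) * rate_term W \<sigma> h E2 t2
      = t * W * (l * ln A1 + m * ln A2)"
    using assms tp unfolding rate_term_def A1_def A2_def l_def m_def k_def
    by (simp add: field_simps)
  also have "\<dots> \<le> t * W * ln (l * A1 + m * A2)"
    using c tp assms by simp
  also have "\<dots> = rate_term W \<sigma> h (u * E1 + (1 - u) * E2) (u * t1 + (1 - u) * t2)"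
    using tp eq unfolding rate_term_def t_def k_def by (simp add: mult.assoc)
  finally show ?thesis .
qed

lemma rate_concave:
  assumes "W > 0" "\<sigma> > 0" "h \<ge> 0" "0 \<le> E1" "0 \<le> E2" "t1 \<ge> 0" "t2 \<ge> 0" "0 < u" "u < 1"
  shows "u * rate_term W \<sigma> h E1 t1 + (1 - u) * rate_term W \<sigma> h E2 t2
         \<le> rate_term W \<sigma> h (u * E1 + (1 - u) * E2) (u * t1 + (1 - u) * t2)"
proof (cases "t1 = 0")
  case t1: True
  show ?thesis
  proof (cases "t2 = 0")
    case True
    then show ?thesis using t1 by (simp add: rate_term_def)
  next
    case False
    have "u * rate_term W \<sigma> h E1 t1 + (1 - u) * rate_term W \<sigma> h E2 t2
        = rate_term W \<sigma> h ((1 - u) * E2) ((1 - u) * t2)"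
      using t1 assms by (simp add: rate_scale rate_term_def mult.assoc)
    also have "\<dots> \<le> rate_term W \<sigma> h (u * E1 + (1 - u) * E2) ((1 - u) * t2)"
      using assms by (intro rate_mono_E) auto
    finally show ?thesis using t1 by simp
  qed
next
  case t1: False
  show ?thesis
  proof (cases "t2 = 0")
    case True
    have "u * rate_term W \<sigma> h E1 t1 + (1 - u) * rate_term W \<sigma> h E2 t2
        = rate_term W \<sigma> h (u * E1) (u * t1)"
      using True assms by (simp add: rate_scale rate_term_def mult.assoc)
    also have "\<dots> \<le> rate_term W \<sigma> h (u * E1 + (1 - u) * E2) (u * t1)"
      using assms by (intro rate_mono_E) auto
    finally show ?thesis using True by simp
  next
    case False
    then show ?thesis using t1 assms rate_concave_pos[of W \<sigma> h E1 E2 t1 t2 u] by simp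
  qed
qed

lemma U_le:
  assumes "\<forall>n\<in>{1..N}. E n \<ge> 0 \<and> t n \<ge> 0"
    "d \<le> (\<Sum>n\<in>{1..N}. rate_term W \<sigma> (h n) (E n) (t n))"
    "2 * (\<Sum>n\<in>{1..N}. t n) \<le> T - L * d / f\<^sub>B"
  shows "U_val N h g W \<sigma> L T f\<^sub>B d \<le> ereal (\<Sum>n\<in>{1..N}. E n * (1 + h n / g n))"
  unfolding U_val_def by (rule Inf_lower) (use assms in blast)

lemma U_nonneg:
  assumes "\<forall>n\<in>{1..N}. h n > 0" "\<forall>n\<in>{1..N}. g n > 0"
  shows "U_val N h g W \<sigma> L T f\<^sub>B d \<ge> 0"
  unfolding U_val_def
proof (rule Inf_greatest)
  fix x assume "x \<in> {ereal (\<Sum>n\<in>{1..N}. E n * (1 + h n / g n)) | E t.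
            (\<forall>n\<in>{1..N}. E n \<ge> 0 \<and> t n \<ge> 0) \<and>
            d \<le> (\<Sum>n\<in>{1..N}. rate_term W \<sigma> (h n) (E n) (t n)) \<and>
            2 * (\<Sum>n\<in>{1..N}. t n) \<le> T - L * d / f\<^sub>B }"
  then obtain E where E: "\<forall>n\<in>{1..N}. E n \<ge> 0" and x: "x = ereal (\<Sum>n\<in>{1..N}. E n * (1 + h n / g n))"
    by blast
  have "0 \<le> (\<Sum>n\<in>{1..N}. E n * (1 + h n / g n))"
  proof (intro sum_nonneg mult_nonneg_nonneg)
    fix n assume n: "n \<in> {1..N}"
    then show "0 \<le> E n" using E by blast
    have "h n / g n > 0" using n assms by simp
    then show "0 \<le> 1 + h n / g n" by simp
  qed
  then show "0 \<le> x" using x by simp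
qed

lemma U_comb:
  assumes hp: "\<forall>n\<in>{1..N}. h n > 0" and W: "W > 0" and s: "\<sigma> > 0" and fB: "f\<^sub>B > 0"
    and u: "0 < u" "u < 1"
    and F1: "\<forall>n\<in>{1..N}. E n \<ge> 0 \<and> t n \<ge> 0"
    "x \<le> (\<Sum>n\<in>{1..N}. rate_term W \<sigma> (h n) (E n) (t n))"
    "2 * (\<Sum>n\<in>{1..N}. t n) \<le> T - L * x / f\<^sub>B"
    and F2: "\<forall>n\<in>{1..N}. E' n \<ge> 0 \<and> t' n \<ge> 0"
    "y \<le> (\<Sum>n\<in>{1..N}. rate_term W \<sigma> (h n) (E' n) (t' n))"
    "2 * (\<Sum>n\<in>{1..N}. t' n) \<le> T - L * y / f\<^sub>B"
  shows "U_val N h g W \<sigma> L T f\<^sub>B (u * x + (1 - u) * y) \<le>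
     ereal (u * (\<Sum>n\<in>{1..N}. E n * (1 + h n / g n)) + (1 - u) * (\<Sum>n\<in>{1..N}. E' n * (1 + h n / g n)))"
proof -
  define E2 where "E2 = (\<lambda>n. u * E n + (1 - u) * E' n)"
  define t2 where "t2 = (\<lambda>n. u * t n + (1 - u) * t' n)"
  have a: "\<forall>n\<in>{1..N}. E2 n \<ge> 0 \<and> t2 n \<ge> 0"
    using F1(1) F2(1) u by (auto simp: E2_def t2_def)
  have "u * x + (1 - u) * y \<le> u * (\<Sum>n\<in>{1..N}. rate_term W \<sigma> (h n) (E n) (t n))
        + (1 - u) * (\<Sum>n\<in>{1..N}. rate_term W \<sigma> (h n) (E' n) (t' n))"
    using F1(2) F2(2) u by (intro add_mono mult_left_mono) auto
  also have "\<dots> = (\<Sum>n\<in>{1..N}. u * rate_term W \<sigma> (h n) (E n) (t n)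
        + (1 - u) * rate_term W \<sigma> (h n) (E' n) (t' n))"
    by (simp add: sum.distrib sum_distrib_left)
  also have "\<dots> \<le> (\<Sum>n\<in>{1..N}. rate_term W \<sigma> (h n) (E2 n) (t2 n))"
    unfolding E2_def t2_def
    by (rule sum_mono, rule rate_concave) (use hp W s u F1(1) F2(1) in \<open>auto simp: less_imp_le\<close>)
  finally have b: "u * x + (1 - u) * y \<le> (\<Sum>n\<in>{1..N}. rate_term W \<sigma> (h n) (E2 n) (t2 n))" .
  have "2 * (\<Sum>n\<in>{1..N}. t2 n) = u * (2 * (\<Sum>n\<in>{1..N}. t n)) + (1 - u) * (2 * (\<Sum>n\<in>{1..N}. t' n))"
  proof -
    have "(\<Sum>n\<in>{1..N}. t2 n) = u * (\<Sum>n\<in>{1..N}. t n) + (1 - u) * (\<Sum>n\<in>{1..N}. t' n)"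
      unfolding t2_def by (simp add: sum.distrib sum_distrib_left)
    then show ?thesis by (simp add: algebra_simps)
  qed
  also have "\<dots> \<le> u * (T - L * x / f\<^sub>B) + (1 - u) * (T - L * y / f\<^sub>B)"
    using F1(3) F2(3) u by (intro add_mono mult_left_mono) auto
  also have "\<dots> = T - L * (u * x + (1 - u) * y) / f\<^sub>B"
    using fB by (simp add: field_simps)
  finally have c: "2 * (\<Sum>n\<in>{1..N}. t2 n) \<le> T - L * (u * x + (1 - u) * y) / f\<^sub>B" .
  have "U_val N h g W \<sigma> L T f\<^sub>B (u * x + (1 - u) * y) \<le> ereal (\<Sum>n\<in>{1..N}. E2 n * (1 + h n / g n))"
    by (rule U_le[OF a b c])
  also have "(\<Sum>n\<in>{1..N}. E2 n * (1 + h n / g n)) = u * (\<Sum>n\<in>{1..N}. E n * (1 + h n / g n)) + (1 - u) * (\<Sum>n\<in>{1..N}. E' n * (1 + h n / g n))"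
    unfolding E2_def by (simp add: sum.distrib sum_distrib_left distrib_right mult.assoc)
  finally show ?thesis .
qed

lemma cube_convex:
  fixes p q u :: real
  assumes "p \<ge> 0" "q \<ge> 0" "0 < u" "u < 1"
  shows "(u * p + (1 - u) * q) ^ 3 \<le> u * p ^ 3 + (1 - u) * q ^ 3"
proof -
  have "u * p ^ 3 + (1 - u) * q ^ 3 - (u * p + (1 - u) * q) ^ 3
      = u * (1 - u) * (p - q)^2 * ((1 + u) * p + (2 - u) * q)"
    by (simp add: algebra_simps power2_eq_square power3_eq_cube)
  also have "\<dots> \<ge> 0" using assms by (intro mult_nonneg_nonneg add_nonneg_nonneg) auto
  finally show ?thesis by simp
qed

lemma U_lessE:
  assumes "U_val N h g W \<sigma> L T f\<^sub>B d < ereal r"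
  obtains E t where "\<forall>n\<in>{1..N}. E n \<ge> 0 \<and> t n \<ge> 0"
    "d \<le> (\<Sum>n\<in>{1..N}. rate_term W \<sigma> (h n) (E n) (t n))"
    "2 * (\<Sum>n\<in>{1..N}. t n) \<le> T - L * d / f\<^sub>B"
    "(\<Sum>n\<in>{1..N}. E n * (1 + h n / g n)) < r"
proof -
  obtain a where a: "a \<in> {ereal (\<Sum>n\<in>{1..N}. E n * (1 + h n / g n)) | E t.
            (\<forall>n\<in>{1..N}. E n \<ge> 0 \<and> t n \<ge> 0) \<and>
            d \<le> (\<Sum>n\<in>{1..N}. rate_term W \<sigma> (h n) (E n) (t n)) \<and>
            2 * (\<Sum>n\<in>{1..N}. t n) \<le> T - L * d / f\<^sub>B }" and ar: "a < ereal r"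
    using assms unfolding U_val_def Inf_less_iff by (elim bexE)
  from a obtain E t where E: "a = ereal (\<Sum>n\<in>{1..N}. E n * (1 + h n / g n))"
     "(\<forall>n\<in>{1..N}. E n \<ge> 0 \<and> t n \<ge> 0)"
     "d \<le> (\<Sum>n\<in>{1..N}. rate_term W \<sigma> (h n) (E n) (t n))"
     "2 * (\<Sum>n\<in>{1..N}. t n) \<le> T - L * d / f\<^sub>B"
    unfolding mem_Collect_eq by (elim exE conjE)
  show ?thesis
    by (rule that[OF E(2) E(3) E(4)]) (use ar E(1) in simp)
qed

lemma ereal_comb_inf:
  fixes a b :: ereal
  assumes "a \<ge> 0" "b \<ge> 0" "a = \<infinity> \<or> b = \<infinity>" "0 < u" "u < 1"
  shows "ereal u * a + ereal (1 - u) * b = \<infinity>"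
  using assms by (cases a; cases b) auto

theorem lemma4:
  fixes N :: nat and h g :: "nat \<Rightarrow> real"
    and W \<sigma> \<kappa> L D T f\<^sub>B :: real
  assumes "N > 0"
    and "\<forall>n\<in>{1..N}. h n > 0" and "\<forall>n\<in>{1..N}. g n > 0"
    and "W > 0" and "\<sigma> > 0" and "\<kappa> > 0" and "L > 0" and "D > 0" and "T > 0" and "f\<^sub>B > 0"
  shows "ereal_convex_on {d. 0 \<le> d \<and> d \<le> D \<and> L * d \<le> f\<^sub>B * T}
           (\<lambda>d. U_val N h g W \<sigma> L T f\<^sub>B d + ereal (\<kappa> * L^3 * (D - d)^3 / T^2))"
proof -
  note hp = assms(2) and gp = assms(3) and Wp = assms(4) and sp = assms(5) and kp = assms(6)
    and Lp = assms(7) and Tp = assms(9) and fp = assms(10)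
  define S where "S = {d. 0 \<le> d \<and> d \<le> D \<and> L * d \<le> f\<^sub>B * T}"
  define U where "U = U_val N h g W \<sigma> L T f\<^sub>B"
  define c where "c = (\<lambda>d. \<kappa> * L^3 * (D - d)^3 / T^2)"
  have Seq: "S = {0..min D (f\<^sub>B * T / L)}"
    using Lp by (auto simp: S_def pos_le_divide_eq mult.commute)
  have convS: "convex S" unfolding Seq by (rule convex_real_interval)
  have Unn: "\<And>d. U d \<ge> 0" unfolding U_def using U_nonneg[OF hp gp] by blast
  have main: "U (u * x + (1 - u) * y) + ereal (c (u * x + (1 - u) * y))
      \<le> ereal u * (U x + ereal (c x)) + ereal (1 - u) * (U y + ereal (c y))"
    if xS: "x \<in> S" and yS: "y \<in> S" and u: "0 < u" "u < 1" for x y u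
  proof -
    have cx: "c x \<ge> 0" "c y \<ge> 0" using xS yS kp Lp by (auto simp: c_def S_def)
    have cz: "c (u * x + (1 - u) * y) \<le> u * c x + (1 - u) * c y"
    proof -
      have "(D - (u * x + (1 - u) * y)) ^ 3 = (u * (D - x) + (1 - u) * (D - y)) ^ 3"
        by (simp add: algebra_simps)
      also have "\<dots> \<le> u * (D - x) ^ 3 + (1 - u) * (D - y) ^ 3"
        using xS yS u by (intro cube_convex) (auto simp: S_def)
      finally have "\<kappa> * L^3 / T^2 * (D - (u * x + (1 - u) * y)) ^ 3
          \<le> \<kappa> * L^3 / T^2 * (u * (D - x) ^ 3 + (1 - u) * (D - y) ^ 3)"
        using kp Lp by (intro mult_left_mono) auto
      moreover have "c (u * x + (1 - u) * y) = \<kappa> * L^3 / T^2 * (D - (u * x + (1 - u) * y)) ^ 3"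
        unfolding c_def by simp
      moreover have "u * c x + (1 - u) * c y = \<kappa> * L^3 / T^2 * (u * (D - x) ^ 3 + (1 - u) * (D - y) ^ 3)"
      proof -
        define K where "K = \<kappa> * L^3 / T^2"
        have e: "\<And>d. c d = K * (D - d) ^ 3" unfolding c_def K_def by simp
        show ?thesis unfolding K_def[symmetric] e by (simp add: ring_distribs)
      qed
      ultimately show ?thesis by linarith
    qed
    show ?thesis
    proof (cases "U x = \<infinity> \<or> U y = \<infinity>")
      case True
      have "U x + ereal (c x) \<ge> 0" "U y + ereal (c y) \<ge> 0"
        using cx Unn[of x] Unn[of y] by (simp_all add: add_nonneg_nonneg)
      moreover have "U x + ereal (c x) = \<infinity> \<or> U y + ereal (c y) = \<infinity>"
        using True by auto
      ultimately have inf: "ereal u * (U x + ereal (c x)) + ereal (1 - u) * (U y + ereal (c y)) = \<infinity>"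
        using u by (intro ereal_comb_inf) auto
      show ?thesis unfolding inf by (rule ereal_less_eq(1))
    next
      case False
      obtain ax where ax: "U x = ereal ax" using False Unn[of x] by (cases "U x") auto
      obtain ay where ay: "U y = ereal ay" using False Unn[of y] by (cases "U y") auto
      have Uz: "U (u * x + (1 - u) * y) \<le> ereal (u * ax + (1 - u) * ay)"
      proof (rule ereal_le_epsilon2)
        fix e :: real assume e: "0 < e"
        have "U x < ereal (ax + e)" using ax e by simp
        then obtain E t where F1: "\<forall>n\<in>{1..N}. E n \<ge> 0 \<and> t n \<ge> 0"
            "x \<le> (\<Sum>n\<in>{1..N}. rate_term W \<sigma> (h n) (E n) (t n))"
            "2 * (\<Sum>n\<in>{1..N}. t n) \<le> T - L * x / f\<^sub>B"
          and c1: "(\<Sum>n\<in>{1..N}. E n * (1 + h n / g n)) < ax + e"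
          unfolding U_def by (rule U_lessE)
        have "U y < ereal (ay + e)" using ay e by simp
        then obtain E' t' where F2: "\<forall>n\<in>{1..N}. E' n \<ge> 0 \<and> t' n \<ge> 0"
            "y \<le> (\<Sum>n\<in>{1..N}. rate_term W \<sigma> (h n) (E' n) (t' n))"
            "2 * (\<Sum>n\<in>{1..N}. t' n) \<le> T - L * y / f\<^sub>B"
          and c2: "(\<Sum>n\<in>{1..N}. E' n * (1 + h n / g n)) < ay + e"
          unfolding U_def by (rule U_lessE)
        have "U (u * x + (1 - u) * y) \<le>
          ereal (u * (\<Sum>n\<in>{1..N}. E n * (1 + h n / g n)) + (1 - u) * (\<Sum>n\<in>{1..N}. E' n * (1 + h n / g n)))"
          unfolding U_def by (rule U_comb[OF hp Wp sp fp u F1 F2])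
        also have "\<dots> \<le> ereal (u * (ax + e) + (1 - u) * (ay + e))"
        proof -
          have "(\<Sum>n\<in>{1..N}. E n * (1 + h n / g n)) \<le> ax + e" using c1 by linarith
          moreover have "(\<Sum>n\<in>{1..N}. E' n * (1 + h n / g n)) \<le> ay + e" using c2 by linarith
          ultimately have "u * (\<Sum>n\<in>{1..N}. E n * (1 + h n / g n)) + (1 - u) * (\<Sum>n\<in>{1..N}. E' n * (1 + h n / g n))
             \<le> u * (ax + e) + (1 - u) * (ay + e)"
            using u by (intro add_mono mult_left_mono) auto
          then show ?thesis by (simp only: ereal_less_eq(3))
        qed
        also have "\<dots> = ereal (u * ax + (1 - u) * ay) + ereal e"
        proof -
          have "u * (ax + e) + (1 - u) * (ay + e) = (u * ax + (1 - u) * ay) + e"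
            by (simp add: algebra_simps)
          then show ?thesis by (simp only: plus_ereal.simps)
        qed
        finally show "U (u * x + (1 - u) * y) \<le> ereal (u * ax + (1 - u) * ay) + ereal e" .
      qed
      have "U (u * x + (1 - u) * y) + ereal (c (u * x + (1 - u) * y))
          \<le> ereal (u * ax + (1 - u) * ay) + ereal (u * c x + (1 - u) * c y)"
        using Uz cz by (intro add_mono) auto
      also have "\<dots> = ereal (u * (ax + c x) + (1 - u) * (ay + c y))"
        by (simp only: plus_ereal.simps ereal.inject) (simp add: algebra_simps)
      also have "\<dots> = ereal u * (U x + ereal (c x)) + ereal (1 - u) * (U y + ereal (c y))"
        unfolding ax ay by (simp only: plus_ereal.simps times_ereal.simps)
      finally show ?thesis .
    qed
  qed
  show ?thesis
    unfolding ereal_convex_on_def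
  proof (intro conjI ballI allI impI)
    show "convex {d. 0 \<le> d \<and> d \<le> D \<and> L * d \<le> f\<^sub>B * T}" using convS unfolding S_def .
  next
    fix x y u :: real
    assume x: "x \<in> {d. 0 \<le> d \<and> d \<le> D \<and> L * d \<le> f\<^sub>B * T}"
      and y: "y \<in> {d. 0 \<le> d \<and> d \<le> D \<and> L * d \<le> f\<^sub>B * T}"
      and u: "0 < u \<and> u < 1"
    have xS: "x \<in> S" and yS: "y \<in> S" using x y unfolding S_def .
    have u1: "0 < u" and u2: "u < 1" using u by auto
    show "U_val N h g W \<sigma> L T f\<^sub>B (u * x + (1 - u) * y) + ereal (\<kappa> * L^3 * (D - (u * x + (1 - u) * y))^3 / T^2)
       \<le> ereal u * (U_val N h g W \<sigma> L T f\<^sub>B x + ereal (\<kappa> * L^3 * (D - x)^3 / T^2))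
         + ereal (1 - u) * (U_val N h g W \<sigma> L T f\<^sub>B y + ereal (\<kappa> * L^3 * (D - y)^3 / T^2))"
      using main[OF xS yS u1 u2] unfolding U_def c_def .
  qed
qed

end
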